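(* Let $S$ be a finite set, $f:S\to\mathbb{R}$ a fitness function to be maximized, $S_{\mathrm{opt}}$ the set of maximizers of $f$ and $S_{\mathrm{non}}=S\setminus S_{\mathrm{opt}}$ (assumed nonempty). Let $s1,\dots,s\kappa$ be $\kappa$ mutation operators on $S$, and let $\mathbf{q}$ be any strategy probability distribution over them. Then the homogeneous mixed strategy (1+1) EA with strategy distribution $\mathbf{q}$ satisfies $$R(\mathbf{T}_{\mathbf{q}})\ \ge\ \min\{R(\mathbf{T}_{sk});\ k=1,\dots,\kappa\}\quad\text{and}\quad T(\mathbf{T}_{\mathbf{q}})\ \le\ \max\{T(\mathbf{T}_{sk});\ k=1,\dots,\kappa\},$$ i.e. its asymptotic convergence rate is not smaller, and its asymptotic hitting time not larger, than that of the worst pure strategy (1+1) EA using only one of these mutation operators.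
   Context: A mutation operator $s$ on the finite set $S$ is a stochastic matrix $\mathbf{P}_{m,s}=[P_{m,s}(x,y)]_{x,y\in S}$ (probability that mutating $x$ yields $y$). Strict elitist selection between parent $x$ and offspring $y$ keeps $y$ if $f(y)>f(x)$ and keeps $x$ otherwise. The pure strategy (1+1) EA EA($s$) repeatedly mutates the current individual by $s$ and applies strict elitist selection; it is a homogeneous Markov chain on $S$ with transition probabilities $P_s(x,y)=P_{m,s}(x,y)$ if $f(y)>f(x)$, $P_s(x,y)=0$ if $y\neq x$ and $f(y)\le f(x)$, and $P_s(x,x)=1-\sum_{y:\,f(y)>f(x)}P_{m,s}(x,y)$. A (state-dependent) strategy probability distribution is a map $x\mapsto \mathbf{q}(x)=(q_{s1}(x),\dots,q_{s\kappa}(x))$ with $q_{sk}(x)\in[0,1]$ and $\sum_k q_{sk}(x)=1$. The homogeneous mixed strategy (1+1) EA with distribution $\mathbf{q}$ at each generation, with current individual $x$, chooses operator $sk$ with probability $q_{sk}(x)$, mutates $x$ by it, and applies strict elitist selection; its transition matrix is $P_{\mathbf{q}}(x,y)=\sum_{k}q_{sk}(x)P_{sk}(x,y)$. For such an EA with transition matrix $\mathbf{P}$, let $\mathbf{T}$ denote the submatrix $[P(x,y)]_{x,y\in S_{\mathrm{non}}}$ and $\rho(\mathbf{T})$ its spectral radius. The asymptotic convergence rate is $R(\mathbf{T})=-\ln\rho(\mathbf{T})$ (with $-\ln 0=+\infty$). The asymptotic hitting time is $T(\mathbf{T})=\rho((\mathbf{I}-\mathbf{T})^{-1})$ if $\rho(\mathbf{T})<1$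 and $T(\mathbf{T})=+\infty$ if $\rho(\mathbf{T})=1$. Subscripts $\mathbf{q}$ and $sk$ indicate the matrices of the mixed strategy EA and of the pure strategy EA($sk$), respectively. *)

theory Defs
  imports "HOL-Analysis.Analysis" "Jordan_Normal_Form.Spectral_Radius"
          "Jordan_Normal_Form.Gauss_Jordan_Elimination"
begin

definition S_opt :: "'a set \<Rightarrow> ('a \<Rightarrow> real) \<Rightarrow> 'a set" where
  "S_opt S f = {x \<in> S. \<forall>y\<in>S. f y \<le> f x}"

definition S_non :: "'a set \<Rightarrow> ('a \<Rightarrow> real) \<Rightarrow> 'a set" where
  "S_non S f = S - S_opt S f"

text \<open>A mutation operator on S: a stochastic matrix indexed by S.\<close>
definition stochastic_on :: "'a set \<Rightarrow> ('a \<Rightarrow> 'a \<Rightarrow> real) \<Rightarrow> bool" where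
  "stochastic_on S Pm \<longleftrightarrow> (\<forall>x\<in>S. (\<forall>y\<in>S. 0 \<le> Pm x y) \<and> (\<Sum>y\<in>S. Pm x y) = 1)"

text \<open>Transition matrix of the pure strategy (1+1) EA with mutation Pm and strict elitist selection.\<close>
definition pure_trans :: "'a set \<Rightarrow> ('a \<Rightarrow> real) \<Rightarrow> ('a \<Rightarrow> 'a \<Rightarrow> real) \<Rightarrow> 'a \<Rightarrow> 'a \<Rightarrow> real" where
  "pure_trans S f Pm x y =
     (if f y > f x then Pm x y
      else if y = x then 1 - (\<Sum>z\<in>{z\<in>S. f z > f x}. Pm x z)
      else 0)"

definition strategy_distribution :: "'a set \<Rightarrow> nat \<Rightarrow> ('a \<Rightarrow> nat \<Rightarrow> real) \<Rightarrow> bool" where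
  "strategy_distribution S \<kappa> q \<longleftrightarrow>
     (\<forall>x\<in>S. (\<forall>k\<in>{1..\<kappa>}. 0 \<le> q x k \<and> q x k \<le> 1) \<and> (\<Sum>k=1..\<kappa>. q x k) = 1)"

definition mixed_trans :: "'a set \<Rightarrow> ('a \<Rightarrow> real) \<Rightarrow> nat \<Rightarrow> (nat \<Rightarrow> 'a \<Rightarrow> 'a \<Rightarrow> real)
    \<Rightarrow> ('a \<Rightarrow> nat \<Rightarrow> real) \<Rightarrow> 'a \<Rightarrow> 'a \<Rightarrow> real" where
  "mixed_trans S f \<kappa> Pm q x y = (\<Sum>k=1..\<kappa>. q x k * pure_trans S f (Pm k) x y)"

definition sub_mat :: "'a::linorder set \<Rightarrow> ('a \<Rightarrow> 'a \<Rightarrow> real) \<Rightarrow> complex mat" where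
  "sub_mat A P = (let xs = sorted_list_of_set A in
     mat (length xs) (length xs) (\<lambda>(i,j). complex_of_real (P (xs ! i) (xs ! j))))"

definition conv_rate :: "complex mat \<Rightarrow> ereal" where
  "conv_rate T = (if spectral_radius T = 0 then \<infinity> else ereal (- ln (spectral_radius T)))"

definition hit_time :: "complex mat \<Rightarrow> ereal" where
  "hit_time T = (if spectral_radius T < 1
      then ereal (spectral_radius (the (mat_inverse (1\<^sub>m (dim_row T) - T))))
      else \<infinity>)"

end

theory Submission
  imports Defs
begin

lemma det_tri:
  fixes A :: "'b::comm_ring_1 mat" and g :: "nat \<Rightarrow> real"
  assumes A: "A \<in> carrier_mat n n"
    and z: "\<And>i j. i<n \<Longrightarrow> j<n \<Longrightarrow> i\<noteq>j \<Longrightarrow> g j \<le> g i \<Longrightarrow> A$$(i,j) = 0"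
  shows "det A = (\<Prod>i=0..<n. A$$(i,i))"
proof -
  have zero: "(\<Prod>i=0..<n. A$$(i,p i)) = 0" if p: "p permutes {0..<n}" and ne: "p \<noteq> id" for p
  proof (rule ccontr)
    assume nz: "(\<Prod>i=0..<n. A$$(i,p i)) \<noteq> 0"
    have nzi: "A$$(i,p i) \<noteq> 0" if "i<n" for i
    proof
      assume "A$$(i,p i) = 0"
      hence "(\<Prod>i=0..<n. A$$(i,p i)) = 0" using that by (intro prod_zero) auto
      with nz show False by simp
    qed
    define D where "D = {i. p i \<noteq> i}"
    have Dsub: "D \<subseteq> {0..<n}" using p unfolding D_def permutes_def by auto
    have Dne: "D \<noteq> {}" using ne unfolding D_def by auto
    have finD: "finite D" using Dsub finite_subset by blast
    define m where "m = Max (g ` D)"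
    have "m \<in> g ` D" unfolding m_def using finD Dne by (intro Max_in) auto
    then obtain i where iD: "i \<in> D" and gi: "g i = m" by auto
    have mx: "g j \<le> g i" if "j \<in> D" for j using gi that finD unfolding m_def by auto
    have "i < n" using iD Dsub by auto
    have pin: "p i < n" using permutes_in_image[OF p] \<open>i<n\<close> by auto
    have "p i \<noteq> i" using iD D_def by auto
    have "p (p i) \<noteq> p i"
    proof
      assume "p (p i) = p i"
      hence "p i = i" using permutes_inj[OF p] by (auto dest: injD)
      with \<open>p i \<noteq> i\<close> show False by simp
    qed
    hence "p i \<in> D" unfolding D_def by auto
    hence "g (p i) \<le> g i" by (rule mx)
    hence "A$$(i,p i) = 0" using z[OF \<open>i<n\<close> pin] \<open>p i \<noteq> i\<close> by auto
    with nzi[OF \<open>i<n\<close>] show False by simp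
  qed
  have idp: "id \<in> {p. p permutes {0..<n}}" by (simp add: permutes_id)
  have fin: "finite {p. p permutes {0..<n}}" by (simp add: finite_permutations)
  have "det A = (\<Sum> p \<in> {p. p permutes {0 ..< n}}. signof p * (\<Prod> i = 0 ..< n. A $$ (i, p i)))"
    using det_def'[OF A] .
  also have "\<dots> = signof id * (\<Prod> i = 0 ..< n. A $$ (i, id i))
     + (\<Sum> p \<in> {p. p permutes {0 ..< n}} - {id}. signof p * (\<Prod> i = 0 ..< n. A $$ (i, p i)))"
    by (subst sum.remove[OF fin idp]) (simp_all add: sign_id)
  also have "(\<Sum> p \<in> {p. p permutes {0 ..< n}} - {id}. signof p * (\<Prod> i = 0 ..< n. A $$ (i, p i))) = 0"
    by (intro sum.neutral) (auto simp: zero)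
  finally show ?thesis by (simp add: sign_id)
qed

lemma eigenvalue_tri:
  fixes A :: "'b::field mat" and g :: "nat \<Rightarrow> real"
  assumes A: "A \<in> carrier_mat n n"
    and z: "\<And>i j. i<n \<Longrightarrow> j<n \<Longrightarrow> i\<noteq>j \<Longrightarrow> g j \<le> g i \<Longrightarrow> A$$(i,j) = 0"
  shows "eigenvalue A e \<longleftrightarrow> (\<exists>i<n. A$$(i,i) = e)"
proof -
  have C: "char_matrix A e \<in> carrier_mat n n" using A by simp
  have Ce: "char_matrix A e $$ (i,j) = A$$(i,j) - (if i = j then e else 0)" if "i<n" "j<n" for i j
    using A that unfolding char_matrix_def by auto
  have "det (char_matrix A e) = (\<Prod>i=0..<n. char_matrix A e $$(i,i))"
    by (rule det_tri[OF C, of g]) (auto simp: Ce z)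
  also have "\<dots> = (\<Prod>i=0..<n. A $$(i,i) - e)" by (intro prod.cong) (auto simp: Ce)
  finally show ?thesis unfolding eigenvalue_det[OF A] by auto
qed


lemma rho_tri:
  fixes A :: "complex mat" and g :: "nat \<Rightarrow> real" and d :: "nat \<Rightarrow> real"
  assumes A: "A \<in> carrier_mat n n" and n: "n > 0"
    and z: "\<And>i j. i<n \<Longrightarrow> j<n \<Longrightarrow> i\<noteq>j \<Longrightarrow> g j \<le> g i \<Longrightarrow> A$$(i,j) = 0"
    and dg: "\<And>i. i<n \<Longrightarrow> A$$(i,i) = complex_of_real (d i)"
    and d0: "\<And>i. i<n \<Longrightarrow> 0 \<le> d i"
  shows "spectral_radius A = Max (d ` {..<n})"
proof -
  have sp: "spectrum A = (\<lambda>i. A$$(i,i)) ` {..<n}"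
    unfolding spectrum_def using eigenvalue_tri[OF A z] by auto
  have "norm ` spectrum A = d ` {..<n}"
    unfolding sp image_image using dg d0 by (auto intro!: image_cong)
  thus ?thesis unfolding spectral_radius_def by simp
qed

lemma inv_tri:
  fixes A :: "complex mat" and g :: "nat \<Rightarrow> real" and d :: "nat \<Rightarrow> real"
  assumes A: "A \<in> carrier_mat n n" and n: "n > 0"
    and z: "\<And>i j. i<n \<Longrightarrow> j<n \<Longrightarrow> i\<noteq>j \<Longrightarrow> g j \<le> g i \<Longrightarrow> A$$(i,j) = 0"
    and dg: "\<And>i. i<n \<Longrightarrow> A$$(i,i) = complex_of_real (d i)"
    and d0: "\<And>i. i<n \<Longrightarrow> 0 \<le> d i"
    and lt: "Max (d ` {..<n}) < 1"
  shows "spectral_radius (the (mat_inverse (1\<^sub>m n - A))) = 1 / (1 - Max (d ` {..<n}))"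
proof -
  define M where "M = 1\<^sub>m n - A"
  have M: "M \<in> carrier_mat n n" unfolding M_def using A by auto
  have dl: "d i < 1" if "i<n" for i
  proof -
    have "d i \<le> Max (d ` {..<n})" using that by (intro Max_ge) auto
    thus ?thesis using lt by linarith
  qed
  have Mz: "M$$(i,j) = 0" if "i<n" "j<n" "i\<noteq>j" "g j \<le> g i" for i j
    using z[OF that] that A unfolding M_def by auto
  have Md: "M$$(i,i) = complex_of_real (1 - d i)" if "i<n" for i
    using dg[OF that] that A unfolding M_def by auto
  have "det M = (\<Prod>i=0..<n. M$$(i,i))" by (rule det_tri[OF M, of g]) (auto simp: Mz)
  also have "\<dots> \<noteq> 0" using Md dl by (auto simp: prod_zero_iff) (metis less_irrefl)
  finally have "det M \<noteq> 0" .
  from det_non_zero_imp_unit[OF M this, of "()"] mat_inverse(1)[OF M, of "()"]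
  obtain B where MB: "mat_inverse M = Some B" by (cases "mat_inverse M") auto
  from mat_inverse(2)[OF M MB] have MB1: "M * B = 1\<^sub>m n" and BM1: "B * M = 1\<^sub>m n"
    and B: "B \<in> carrier_mat n n" by auto
  have evM: "eigenvalue M e \<longleftrightarrow> (\<exists>i<n. M$$(i,i) = e)" for e by (rule eigenvalue_tri[OF M Mz])
  have spB: "spectrum B = (\<lambda>i. inverse (M$$(i,i))) ` {..<n}"
  proof (intro equalityI subsetI)
    fix l assume "l \<in> spectrum B"
    then obtain v where v: "v \<in> carrier_vec n" "v \<noteq> 0\<^sub>v n" "B *\<^sub>v v = l \<cdot>\<^sub>v v"
      unfolding spectrum_def eigenvalue_def eigenvector_def using B by auto
    have "v = (M * B) *\<^sub>v v" using MB1 v by simp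
    also have "\<dots> = M *\<^sub>v (B *\<^sub>v v)" using M B v by simp
    also have "\<dots> = l \<cdot>\<^sub>v (M *\<^sub>v v)" using v mult_mat_vec[OF M] by simp
    finally have vv: "v = l \<cdot>\<^sub>v (M *\<^sub>v v)" .
    have l0: "l \<noteq> 0"
    proof
      assume l: "l = 0"
      have "v $ i = 0" if "i < n" for i
      proof -
        have "v $ i = (l \<cdot>\<^sub>v (M *\<^sub>v v)) $ i" using vv by simp
        also have "\<dots> = 0" using l that M by simp
        finally show ?thesis .
      qed
      hence "v = 0\<^sub>v n" using v by (intro eq_vecI) auto
      with v show False by simp
    qed
    have "M *\<^sub>v v = inverse l \<cdot>\<^sub>v v"
      by (subst vv) (use l0 in \<open>simp add: smult_smult_assoc\<close>)
    hence "eigenvalue M (inverse l)" unfolding eigenvalue_def eigenvector_def using v M by auto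
    then obtain i where "i<n" "M$$(i,i) = inverse l" using evM by auto
    thus "l \<in> (\<lambda>i. inverse (M$$(i,i))) ` {..<n}" by force
  next
    fix l assume "l \<in> (\<lambda>i. inverse (M$$(i,i))) ` {..<n}"
    then obtain i where i: "i<n" "l = inverse (M$$(i,i))" by auto
    have "eigenvalue M (M$$(i,i))" using evM i by auto
    then obtain v where v: "v \<in> carrier_vec n" "v \<noteq> 0\<^sub>v n" "M *\<^sub>v v = M$$(i,i) \<cdot>\<^sub>v v"
      unfolding eigenvalue_def eigenvector_def using M by auto
    have mu0: "M$$(i,i) \<noteq> 0" using Md dl i by auto (metis less_irrefl)
    have "v = (B * M) *\<^sub>v v" using BM1 v by simp
    also have "\<dots> = B *\<^sub>v (M *\<^sub>v v)" using M B v by simp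
    also have "\<dots> = M$$(i,i) \<cdot>\<^sub>v (B *\<^sub>v v)" using v mult_mat_vec[OF B] by simp
    finally have vv: "v = M$$(i,i) \<cdot>\<^sub>v (B *\<^sub>v v)" .
    have "B *\<^sub>v v = l \<cdot>\<^sub>v v"
      by (subst (2) vv) (use mu0 i in \<open>simp add: smult_smult_assoc\<close>)
    thus "l \<in> spectrum B" unfolding spectrum_def eigenvalue_def eigenvector_def using v B by auto
  qed
  have cm: "cmod (1 - complex_of_real t) = 1 - t" if "t<1" for t
  proof -
    have "1 - complex_of_real t = complex_of_real (1 - t)" by simp
    hence "cmod (1 - complex_of_real t) = \<bar>1 - t\<bar>" by (simp only: norm_of_real)
    thus ?thesis using that by simp
  qed
  have nB: "norm ` spectrum B = (\<lambda>t. 1 / (1 - t)) ` d ` {..<n}"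
    unfolding spB image_image using Md dl cm
    by (intro image_cong) (auto simp: norm_inverse divide_inverse)
  define D where "D = d ` {..<n}"
  have fD: "finite D" "D \<noteq> {}" using n unfolding D_def by auto
  have mono: "1/(1-s) \<le> 1/(1-t)" if "s \<le> t" "t < 1" for s t :: real
    using that by (simp add: frac_le)
  have "Max ((\<lambda>t. 1 / (1 - t)) ` D) = 1 / (1 - Max D)"
  proof (rule Max_eqI)
    show "finite ((\<lambda>t. 1 / (1 - t)) ` D)" using fD by auto
    show "y \<le> 1 / (1 - Max D)" if yin: "y \<in> (\<lambda>t. 1 / (1 - t)) ` D" for y
    proof -
      obtain t where t: "t \<in> D" "y = 1/(1-t)" using yin by auto
      have "t \<le> Max D" using t fD by auto
      thus ?thesis using t mono lt unfolding D_def by auto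
    qed
    show "1 / (1 - Max D) \<in> (\<lambda>t. 1 / (1 - t)) ` D" using Max_in[OF fD] by auto
  qed
  thus ?thesis unfolding spectral_radius_def M_def[symmetric] MB
    using nB D_def by (simp only: option.sel)
qed


lemma sub_mat_facts:
  fixes X :: "'a::linorder set" and P :: "'a \<Rightarrow> 'a \<Rightarrow> real" and f :: "'a \<Rightarrow> real"
  assumes fin: "finite X" and ne: "X \<noteq> {}"
    and off: "\<And>x y. x\<in>X \<Longrightarrow> y\<in>X \<Longrightarrow> x\<noteq>y \<Longrightarrow> f y \<le> f x \<Longrightarrow> P x y = 0"
    and nn: "\<And>x. x\<in>X \<Longrightarrow> 0 \<le> P x x"
  shows "spectral_radius (sub_mat X P) = Max ((\<lambda>x. P x x) ` X)"
    and "Max ((\<lambda>x. P x x) ` X) < 1 \<Longrightarrow>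
      spectral_radius (the (mat_inverse (1\<^sub>m (dim_row (sub_mat X P)) - sub_mat X P)))
        = 1 / (1 - Max ((\<lambda>x. P x x) ` X))"
proof -
  define xs where "xs = sorted_list_of_set X"
  define n where "n = length xs"
  have dist: "distinct xs" and setxs: "set xs = X" unfolding xs_def using fin by auto
  have n0: "n > 0" unfolding n_def using setxs ne by (cases xs) auto
  have SM: "sub_mat X P = mat n n (\<lambda>(i,j). complex_of_real (P (xs ! i) (xs ! j)))"
    unfolding sub_mat_def xs_def n_def Let_def by simp
  have A: "sub_mat X P \<in> carrier_mat n n" unfolding SM by simp
  have inX: "xs ! i \<in> X" if "i < n" for i using that setxs unfolding n_def by auto
  have z: "sub_mat X P $$ (i,j) = 0" if "i<n" "j<n" "i\<noteq>j" "f (xs!j) \<le> f (xs!i)" for i j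
  proof -
    have "xs ! i \<noteq> xs ! j" using dist that nth_eq_iff_index_eq unfolding n_def by blast
    hence "P (xs!i) (xs!j) = 0" using off inX that by auto
    thus ?thesis unfolding SM using that by simp
  qed
  have dg: "sub_mat X P $$ (i,i) = complex_of_real (P (xs!i) (xs!i))" if "i<n" for i
    unfolding SM using that by simp
  have d0: "0 \<le> P (xs!i) (xs!i)" if "i<n" for i using nn inX that by auto
  have img: "(\<lambda>i. P (xs!i) (xs!i)) ` {..<n} = (\<lambda>x. P x x) ` X"
  proof -
    have "(\<lambda>i. xs!i) ` {..<n} = X" unfolding n_def setxs[symmetric]
      by (auto simp: set_conv_nth)
    hence "(\<lambda>x. P x x) ` ((\<lambda>i. xs!i) ` {..<n}) = (\<lambda>x. P x x) ` X" by simp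
    thus ?thesis by (simp add: image_image)
  qed
  show "spectral_radius (sub_mat X P) = Max ((\<lambda>x. P x x) ` X)"
    using rho_tri[OF A n0, of "\<lambda>i. f (xs!i)" "\<lambda>i. P (xs!i) (xs!i)"] z dg d0 img by simp
  assume lt: "Max ((\<lambda>x. P x x) ` X) < 1"
  have dr: "dim_row (sub_mat X P) = n" using A by simp
  show "spectral_radius (the (mat_inverse (1\<^sub>m (dim_row (sub_mat X P)) - sub_mat X P)))
        = 1 / (1 - Max ((\<lambda>x. P x x) ` X))"
    unfolding dr
    using inv_tri[OF A n0, of "\<lambda>i. f (xs!i)" "\<lambda>i. P (xs!i) (xs!i)"] z dg d0 img lt by simp
qed


lemma conv_hit:
  fixes X :: "'a::linorder set" and P :: "'a \<Rightarrow> 'a \<Rightarrow> real" and f :: "'a \<Rightarrow> real"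
  assumes fin: "finite X" and ne: "X \<noteq> {}"
    and off: "\<And>x y. x\<in>X \<Longrightarrow> y\<in>X \<Longrightarrow> x\<noteq>y \<Longrightarrow> f y \<le> f x \<Longrightarrow> P x y = 0"
    and nn: "\<And>x. x\<in>X \<Longrightarrow> 0 \<le> P x x"
  shows "conv_rate (sub_mat X P) = (if Max ((\<lambda>x. P x x) ` X) = 0 then \<infinity>
            else ereal (- ln (Max ((\<lambda>x. P x x) ` X))))"
    and "hit_time (sub_mat X P) = (if Max ((\<lambda>x. P x x) ` X) < 1
            then ereal (1 / (1 - Max ((\<lambda>x. P x x) ` X))) else \<infinity>)"
proof -
  note a = sub_mat_facts[of X f P, OF fin ne off nn]
  show "conv_rate (sub_mat X P) = (if Max ((\<lambda>x. P x x) ` X) = 0 then \<infinity>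
            else ereal (- ln (Max ((\<lambda>x. P x x) ` X))))"
    unfolding conv_rate_def using a(1) by simp
  show "hit_time (sub_mat X P) = (if Max ((\<lambda>x. P x x) ` X) < 1
            then ereal (1 / (1 - Max ((\<lambda>x. P x x) ` X))) else \<infinity>)"
    unfolding hit_time_def using a(1) a(2) by simp
qed

lemma conv_anti: "0 \<le> a \<Longrightarrow> a \<le> (b::real) \<Longrightarrow>
  (if b = 0 then \<infinity> else ereal (- ln b)) \<le> (if a = 0 then \<infinity> else ereal (- ln a))"
  by auto

lemma hit_mono: "a \<le> (b::real) \<Longrightarrow>
  (if a < 1 then ereal (1 / (1 - a)) else \<infinity>) \<le> (if b < 1 then ereal (1 / (1 - b)) else \<infinity>)"
  by (auto simp: frac_le)

theorem theorem2:
  fixes S :: "'a::linorder set" and f :: "'a \<Rightarrow> real" and \<kappa> :: nat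
    and Pm :: "nat \<Rightarrow> 'a \<Rightarrow> 'a \<Rightarrow> real" and q :: "'a \<Rightarrow> nat \<Rightarrow> real"
  assumes "finite S"
    and "S_non S f \<noteq> {}"
    and "\<kappa> \<ge> 1"
    and "\<forall>k\<in>{1..\<kappa>}. stochastic_on S (Pm k)"
    and "strategy_distribution S \<kappa> q"
  shows "conv_rate (sub_mat (S_non S f) (mixed_trans S f \<kappa> Pm q))
           \<ge> Min ((\<lambda>k. conv_rate (sub_mat (S_non S f) (pure_trans S f (Pm k)))) ` {1..\<kappa>})
       \<and> hit_time (sub_mat (S_non S f) (mixed_trans S f \<kappa> Pm q))
           \<le> Max ((\<lambda>k. hit_time (sub_mat (S_non S f) (pure_trans S f (Pm k)))) ` {1..\<kappa>})"
proof -
  note finS = assms(1)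
  define X where "X = S_non S f"
  have XS: "X \<subseteq> S" unfolding X_def S_non_def by auto
  have finX: "finite X" using XS finS finite_subset by blast
  have neX: "X \<noteq> {}" using assms(2) X_def by simp
  define Pk where "Pk k = pure_trans S f (Pm k)" for k
  define Q where "Q = mixed_trans S f \<kappa> Pm q"
  have sto: "\<And>x y. x \<in> S \<Longrightarrow> y \<in> S \<Longrightarrow> 0 \<le> Pm k x y" "\<And>x. x \<in> S \<Longrightarrow> (\<Sum>y\<in>S. Pm k x y) = 1"
    if "k \<in> {1..\<kappa>}" for k using assms(4) that unfolding stochastic_on_def by auto
  have qq: "\<And>k. k\<in>{1..\<kappa>} \<Longrightarrow> 0 \<le> q x k" "(\<Sum>k=1..\<kappa>. q x k) = 1" if "x \<in> S" for x
    using assms(5) that unfolding strategy_distribution_def by auto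
  have Pkoff: "Pk k x y = 0" if "x \<noteq> y" "f y \<le> f x" for k x y
    using that unfolding Pk_def pure_trans_def by auto
  have Pkd: "Pk k x x = 1 - (\<Sum>z\<in>{z\<in>S. f z > f x}. Pm k x z)" for k x
    unfolding Pk_def pure_trans_def by simp
  have Pk01: "0 \<le> Pk k x x \<and> Pk k x x \<le> 1" if "k \<in> {1..\<kappa>}" "x \<in> S" for k x
  proof -
    have "(\<Sum>z\<in>{z\<in>S. f z > f x}. Pm k x z) \<le> (\<Sum>z\<in>S. Pm k x z)"
      using sto(1)[OF that(1) that(2)] finS by (intro sum_mono2) auto
    moreover have "0 \<le> (\<Sum>z\<in>{z\<in>S. f z > f x}. Pm k x z)"
      using sto(1)[OF that(1) that(2)] by (intro sum_nonneg) auto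
    ultimately show ?thesis using sto(2)[OF that] Pkd by auto
  qed
  have Qoff: "Q x y = 0" if "x \<noteq> y" "f y \<le> f x" for x y
    unfolding Q_def mixed_trans_def using Pkoff[OF that] Pk_def by simp
  have Qd: "Q x x = (\<Sum>k=1..\<kappa>. q x k * Pk k x x)" for x
    unfolding Q_def mixed_trans_def Pk_def by simp
  have Q0: "0 \<le> Q x x" if "x \<in> S" for x
    unfolding Qd using qq[OF that] Pk01[OF _ that] by (intro sum_nonneg) auto
  define r where "r k = Max ((\<lambda>x. Pk k x x) ` X)" for k
  define rq where "rq = Max ((\<lambda>x. Q x x) ` X)"
  have K: "finite {1..\<kappa>}" "{1..\<kappa>} \<noteq> {}" using assms(3) by auto
  have "Max (r ` {1..\<kappa>}) \<in> r ` {1..\<kappa>}" using K by (intro Max_in) auto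
  then obtain k0 where k0: "k0 \<in> {1..\<kappa>}" "r k0 = Max (r ` {1..\<kappa>})"
    by (metis imageE)
  have rk: "Pk k x x \<le> r k0" if "k \<in> {1..\<kappa>}" "x \<in> X" for k x
  proof -
    have "Pk k x x \<le> r k" unfolding r_def using finX that by auto
    also have "r k \<le> r k0" unfolding k0(2) using K that by auto
    finally show ?thesis .
  qed
  have rq_le: "rq \<le> r k0"
    unfolding rq_def
  proof (rule Max.boundedI)
    show "finite ((\<lambda>x. Q x x) ` X)" using finX by auto
    show "(\<lambda>x. Q x x) ` X \<noteq> {}" using neX by auto
    fix a assume "a \<in> (\<lambda>x. Q x x) ` X"
    then obtain x where x: "x \<in> X" "a = Q x x" by auto
    have xS: "x \<in> S" using x XS by auto
    have "Q x x \<le> (\<Sum>k=1..\<kappa>. q x k * r k0)"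
      unfolding Qd using qq[OF xS] rk x by (intro sum_mono mult_left_mono) auto
    also have "\<dots> = r k0" using qq(2)[OF xS] by (simp add: sum_distrib_right[symmetric])
    finally show "a \<le> r k0" using x by simp
  qed
  have rq0: "0 \<le> rq"
  proof -
    obtain x where x: "x \<in> X" using neX by auto
    have "0 \<le> Q x x" using Q0 x XS by auto
    also have "Q x x \<le> rq" unfolding rq_def using finX x by auto
    finally show ?thesis .
  qed
  have cQ: "conv_rate (sub_mat X Q) = (if rq = 0 then \<infinity> else ereal (- ln rq))"
   and hQ: "hit_time (sub_mat X Q) = (if rq < 1 then ereal (1 / (1 - rq)) else \<infinity>)"
  proof -
    have offQ: "Q x y = 0" if "x\<in>X" "y\<in>X" "x\<noteq>y" "f y \<le> f x" for x y
      using Qoff that by blast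
    have nnQ: "0 \<le> Q x x" if "x\<in>X" for x using Q0 XS that by auto
    note cq = conv_hit[of X f Q, OF finX neX offQ nnQ]
    show "conv_rate (sub_mat X Q) = (if rq = 0 then \<infinity> else ereal (- ln rq))"
      unfolding rq_def by (rule cq(1))
    show "hit_time (sub_mat X Q) = (if rq < 1 then ereal (1 / (1 - rq)) else \<infinity>)"
      unfolding rq_def by (rule cq(2))
  qed
  have ck: "conv_rate (sub_mat X (Pk k0)) = (if r k0 = 0 then \<infinity> else ereal (- ln (r k0)))"
   and hk: "hit_time (sub_mat X (Pk k0)) = (if r k0 < 1 then ereal (1 / (1 - r k0)) else \<infinity>)"
  proof -
    have offQ: "Pk k0 x y = 0" if "x\<in>X" "y\<in>X" "x\<noteq>y" "f y \<le> f x" for x y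
      using Pkoff that by blast
    have nnQ: "0 \<le> Pk k0 x x" if "x\<in>X" for x using Pk01[OF k0(1)] XS that by auto
    note cq = conv_hit[of X f "Pk k0", OF finX neX offQ nnQ]
    show "conv_rate (sub_mat X (Pk k0)) = (if r k0 = 0 then \<infinity> else ereal (- ln (r k0)))"
      unfolding r_def by (rule cq(1))
    show "hit_time (sub_mat X (Pk k0)) = (if r k0 < 1 then ereal (1 / (1 - r k0)) else \<infinity>)"
      unfolding r_def by (rule cq(2))
  qed
  have "Min ((\<lambda>k. conv_rate (sub_mat X (Pk k))) ` {1..\<kappa>}) \<le> conv_rate (sub_mat X (Pk k0))"
    using K k0 by auto
  also have "\<dots> \<le> conv_rate (sub_mat X Q)" unfolding ck cQ by (rule conv_anti[OF rq0 rq_le])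
  finally have 1: "Min ((\<lambda>k. conv_rate (sub_mat X (Pk k))) ` {1..\<kappa>}) \<le> conv_rate (sub_mat X Q)" .
  have "hit_time (sub_mat X Q) \<le> hit_time (sub_mat X (Pk k0))"
    unfolding hQ hk by (rule hit_mono[OF rq_le])
  also have "\<dots> \<le> Max ((\<lambda>k. hit_time (sub_mat X (Pk k))) ` {1..\<kappa>})"
    using K k0 by auto
  finally have 2: "hit_time (sub_mat X Q) \<le> Max ((\<lambda>k. hit_time (sub_mat X (Pk k))) ` {1..\<kappa>})" .
  show ?thesis using 1 2 unfolding X_def Q_def Pk_def by simp
qed

end
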